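(* Assume $\mu\le0$. Then the function $$v(y)=\int_0^y\Big\{\frac{\kappa_A(u)}{G\big(\kappa_A(u)/A\big)}+AF\Big(G\Big(\frac{\kappa_A(u)}{A}\Big)\Big)\Big\}\,du,\qquad 0\le y<\bar\delta_A,$$ (where the integrand at $u=0$ is defined by continuity, equal to $0$) is continuously differentiable on $[0,\bar\delta_A)$ and is a classical solution of the Hamilton–Jacobi–Bellman equation $$\kappa_A(y)+\inf_{x\ge0}\{AxF(x)-xv'(y)\}=0,\qquad y\in[0,\bar\delta_A),$$ with boundary condition $v(0)=0$; moreover the infimum is attained at $x^*=G(\kappa_A(y)/A)$.
   Context: $L$ is a one-dimensional, non-trivial Lévy process such that $L_1$ has finite second moment and the set $\{\delta<0:\mathbb E[e^{\delta L_1}]<\infty\}$ is non-empty; it has the decomposition $L_t=\mu t+\sigma W_t+\int_{\mathbb R}x\,(N(t,dx)-t\nu(dx))$ with $\mu\in\mathbb R$ the drift. Let $\bar\delta=\inf\{\delta<0:\mathbb E[e^{\delta L_1}]<\infty\}$, $A>0$, $\bar\delta_A=-\bar\delta/A$, $\kappa(x)=\ln\mathbb E[e^{xL_1}]$ and $\kappa_A(x)=\kappa(-Ax)$ for $x\in[0,\bar\delta_A)$ (when $\mu\le 0$, $\kappa_A\ge0$). $F:[0,\infty)\to[0,\infty)$ satisfies (i) $F\in C([0,\infty))\cap C^1((0,\infty))$; (ii) $F(0)=0$; (iii) $x\mapsto xF(x)$ is strictly convex on $[0,\infty)$; (iv) $x\mapsto x^2F'(x)$ is strictly increasing on $(0,\infty)$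 and tends to $\infty$ as $x\to\infty$. $G:[0,\infty)\to[0,\infty)$ is the inverse of $x\mapsto x^2F'(x)$, with $G(0)=0$. *)

theory Defs
  imports "HOL-Probability.Probability"
begin

definition strictly_convex_on :: "real set \<Rightarrow> (real \<Rightarrow> real) \<Rightarrow> bool" where
  "strictly_convex_on S f \<longleftrightarrow>
     (\<forall>x\<in>S. \<forall>y\<in>S. x \<noteq> y \<longrightarrow>
        (\<forall>u::real. 0 < u \<and> u < 1 \<longrightarrow> f ((1 - u) * x + u * y) < (1 - u) * f x + u * f y))"

definition levy_process :: "'a measure \<Rightarrow> (real \<Rightarrow> 'a \<Rightarrow> real) \<Rightarrow> bool" where
  "levy_process M L \<longleftrightarrow>
     prob_space M \<and>
     (\<forall>t\<ge>0. L t \<in> borel_measurable M) \<and>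
     (AE \<omega> in M. L 0 \<omega> = 0) \<and>
     (\<forall>s t. 0 \<le> s \<longrightarrow> s \<le> t \<longrightarrow>
        distr M borel (\<lambda>\<omega>. L t \<omega> - L s \<omega>) = distr M borel (L (t - s))) \<and>
     (\<forall>(n::nat) (ts::nat \<Rightarrow> real). 0 \<le> ts 0 \<longrightarrow> mono ts \<longrightarrow>
        prob_space.indep_vars M (\<lambda>_. borel) (\<lambda>i \<omega>. L (ts (Suc i)) \<omega> - L (ts i) \<omega>) {..<n}) \<and>
     (\<forall>t\<ge>0. \<forall>e>0. ((\<lambda>s. measure M {\<omega> \<in> space M. \<bar>L s \<omega> - L t \<omega>\<bar> > e}) \<longlongrightarrow> 0)
        (at t within {0..})) \<and>
     (AE \<omega> in M. \<forall>t\<ge>0. continuous (at t within {t..}) (\<lambda>s. L s \<omega>) \<and>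
        (0 < t \<longrightarrow> (\<exists>l. ((\<lambda>s. L s \<omega>) \<longlongrightarrow> l) (at_left t))))"

definition kappa :: "'a measure \<Rightarrow> (real \<Rightarrow> 'a \<Rightarrow> real) \<Rightarrow> real \<Rightarrow> real" where
  "kappa M L x = ln (integral\<^sup>L M (\<lambda>\<omega>. exp (x * L 1 \<omega>)))"

definition kappaA :: "'a measure \<Rightarrow> (real \<Rightarrow> 'a \<Rightarrow> real) \<Rightarrow> real \<Rightarrow> real \<Rightarrow> real" where
  "kappaA M L A x = kappa M L (- A * x)"

text \<open>delta_bar = inf {delta < 0 : E[exp(delta L_1)] < infinity}, in the extended reals
  (it may be -infinity).\<close>
definition delta_bar :: "'a measure \<Rightarrow> (real \<Rightarrow> 'a \<Rightarrow> real) \<Rightarrow> ereal" where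
  "delta_bar M L = Inf (ereal ` {\<delta>::real. \<delta> < 0 \<and> integrable M (\<lambda>\<omega>. exp (\<delta> * L 1 \<omega>))})"

text \<open>The interval [0, delta_bar_A) with delta_bar_A = - delta_bar / A, i.e.
  0 <= y and delta_bar < -A y.\<close>
definition dom_A :: "'a measure \<Rightarrow> (real \<Rightarrow> 'a \<Rightarrow> real) \<Rightarrow> real \<Rightarrow> real set" where
  "dom_A M L A = {y. 0 \<le> y \<and> delta_bar M L < ereal (- A * y)}"

end

theory Submission
  imports Defs
begin


lemma F_facts:
  fixes F G :: "real \<Rightarrow> real"
  assumes F_cont: "continuous_on {0..} F"
    and F_C1: "\<forall>x>0. F differentiable (at x)" "continuous_on {0<..} (deriv F)"
    and F_nonneg: "\<forall>x\<ge>0. F x \<ge> 0"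
    and F_0: "F 0 = 0"
    and F_mono: "strict_mono_on {0<..} (\<lambda>x. x\<^sup>2 * deriv F x)"
    and G_inv: "\<forall>z>0. G z > 0 \<and> (G z)\<^sup>2 * deriv F (G z) = z"
  shows "\<forall>x>0. x\<^sup>2 * deriv F x > 0"
    and "\<forall>y>0. (y\<^sup>2 * deriv F y) / y \<le> 4 * F (2*y)"
    and "\<forall>z>0. isCont G z"
    and "\<forall>z>0. \<forall>x>0. z < x\<^sup>2 * deriv F x \<longrightarrow> G z < x"
proof -
  define h where "h x = x\<^sup>2 * deriv F x" for x
  have D: "DERIV F x :> deriv F x" if "x > 0" for x
    using F_C1(1) that DERIV_deriv_iff_real_differentiable by blast
  have hm: "h a < h b" if "0 < a" "a < b" for a b
    using strict_mono_onD[OF F_mono, of a b] that unfolding h_def by auto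
  show hp: "\<forall>x>0. x\<^sup>2 * deriv F x > 0"
  proof (intro allI impI, rule ccontr)
    fix x0 :: real assume x0: "x0 > 0" "\<not> 0 < x0\<^sup>2 * deriv F x0"
    have "continuous_on {0..x0} F" using F_cont by (rule continuous_on_subset) auto
    moreover have "\<forall>x. 0 < x \<and> x < x0 \<longrightarrow> F differentiable (at x)" using F_C1 by auto
    ultimately obtain l z where z: "0 < z" "z < x0" "DERIV F z :> l" "F x0 - F 0 = (x0 - 0) * l"
      using MVT[of 0 x0 F] x0 by blast
    have "l = deriv F z" using z D DERIV_unique by blast
    have "h z < h x0" using hm z by auto
    then have "z\<^sup>2 * deriv F z < 0" using x0 unfolding h_def by auto
    then have "deriv F z < 0" by (simp add: mult_less_0_iff)
    then have "l < 0" using \<open>l = _\<close> by simp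
    have "F x0 = x0 * l" using z(4) F_0 by simp
    also have "\<dots> < 0" using x0(1) \<open>l < 0\<close> by (rule mult_pos_neg)
    finally have "F x0 < 0" .
    moreover have "F x0 \<ge> 0" using F_nonneg x0(1) by simp
    ultimately show False by simp
  qed
  show "\<forall>y>0. (y\<^sup>2 * deriv F y) / y \<le> 4 * F (2*y)"
  proof (intro allI impI)
    fix y :: real assume y: "y > 0"
    have "continuous_on {y..2*y} F" by (rule continuous_on_subset[OF F_cont]) (use y in auto)
    moreover have "\<forall>x. y < x \<and> x < 2*y \<longrightarrow> F differentiable (at x)" using F_C1 y by auto
    ultimately obtain l z where z: "y < z" "z < 2*y" "DERIV F z :> l" "F (2*y) - F y = (2*y - y) * l"
      using MVT[of y "2*y" F] y by auto
    have l: "l = deriv F z" using z D y DERIV_unique by (meson less_trans)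
    have "h y < h z" using hm z y by auto
    have "h y / (4*y\<^sup>2) \<le> h z / z\<^sup>2"
    proof -
      have "h y \<ge> 0" using hp y unfolding h_def by auto
      have "z\<^sup>2 \<le> (2*y)\<^sup>2" using z y by (intro power_mono) auto
      then have "z\<^sup>2 \<le> 4*y\<^sup>2" by (simp add: power_mult_distrib)
      have "h y / (4*y\<^sup>2) \<le> h y / z\<^sup>2"
        using \<open>h y \<ge> 0\<close> \<open>z\<^sup>2 \<le> 4*y\<^sup>2\<close> z y by (intro divide_left_mono) auto
      also have "\<dots> \<le> h z / z\<^sup>2" using \<open>h y < h z\<close> by (simp add: divide_right_mono)
      finally show ?thesis .
    qed
    also have "h z / z\<^sup>2 = l" using l z y unfolding h_def by auto
    finally have "h y / (4*y\<^sup>2) \<le> l" .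
    then have "y * (h y / (4*y\<^sup>2)) \<le> y * l" using y by (intro mult_left_mono) auto
    also have "\<dots> = F (2*y) - F y" using z by simp
    also have "\<dots> \<le> F (2*y)" using F_nonneg y by auto
    finally have "y * (h y / (4*y\<^sup>2)) \<le> F (2*y)" .
    moreover have "y * (h y / (4*y\<^sup>2)) = (h y / y) / 4" using y by (simp add: power2_eq_square field_simps)
    ultimately show "(y\<^sup>2 * deriv F y) / y \<le> 4 * F (2*y)" unfolding h_def by simp
  qed
  have GH: "G (h x) = x" if "x > 0" for x
  proof -
    have hx: "h x > 0" using hp that unfolding h_def by auto
    then have "G (h x) > 0" "h (G (h x)) = h x" using G_inv unfolding h_def by auto
    then show ?thesis
    proof -
      assume a: "G (h x) > 0" "h (G (h x)) = h x"
      show ?thesis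
      proof (rule linorder_cases[of "G (h x)" x])
        assume "G (h x) < x" then have "h (G (h x)) < h x" using hm a by blast
        then show ?thesis using a by simp
      next
        assume "x < G (h x)" then have "h x < h (G (h x))" using hm that by blast
        then show ?thesis using a by simp
      qed
    qed
  qed
  have hc: "isCont h x" if "x > 0" for x
  proof -
    have "isCont (deriv F) x" using F_C1(2) that
      by (simp add: continuous_on_eq_continuous_at open_greaterThan)
    then show ?thesis unfolding h_def by (intro continuous_intros)
  qed
  show "\<forall>z>0. isCont G z"
  proof (intro allI impI)
    fix z :: real assume z: "z > 0"
    let ?x = "G z"
    have x: "?x > 0" "h ?x = z" using G_inv z unfolding h_def by auto
    have "isCont G (h ?x)"
    proof (rule isCont_inverse_function[where d = "?x/2" and f = h and g = G and x = ?x])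
      show "0 < ?x/2" using x by simp
      show "G (h t) = t" if "\<bar>t - ?x\<bar> \<le> ?x/2" for t
      proof -
        have "t > 0" using x(1) that by (auto simp: abs_if split: if_splits)
        then show ?thesis by (rule GH)
      qed
      show "isCont h t" if "\<bar>t - ?x\<bar> \<le> ?x/2" for t
      proof -
        have "t > 0" using x(1) that by (auto simp: abs_if split: if_splits)
        then show ?thesis by (rule hc)
      qed
    qed
    then show "isCont G z" using x by simp
  qed
  show "\<forall>z>0. \<forall>x>0. z < x\<^sup>2 * deriv F x \<longrightarrow> G z < x"
  proof (intro allI impI)
    fix z x :: real assume a: "z > 0" "x > 0" "z < x\<^sup>2 * deriv F x"
    have "G z > 0" "h (G z) = z" using G_inv a unfolding h_def by auto
    show "G z < x"
    proof (rule ccontr)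
      assume "\<not> G z < x"
      then have "x \<le> G z" by simp
      then have "h x \<le> h (G z)"
      proof (cases "x = G z")
        case False then have "x < G z" using \<open>x \<le> G z\<close> by simp
        then show ?thesis using hm[OF a(2)] by (simp add: less_imp_le)
      qed simp
      then show False using a \<open>h (G z) = z\<close> unfolding h_def by auto
    qed
  qed
qed


lemma g_cont:
  fixes F G :: "real \<Rightarrow> real" and A :: real
  assumes A_pos: "A > 0"
    and F_cont: "continuous_on {0..} F"
    and F_C1: "\<forall>x>0. F differentiable (at x)" "continuous_on {0<..} (deriv F)"
    and F_nonneg: "\<forall>x\<ge>0. F x \<ge> 0"
    and F_0: "F 0 = 0"
    and F_mono: "strict_mono_on {0<..} (\<lambda>x. x\<^sup>2 * deriv F x)"
    and G_0: "G 0 = 0"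
    and G_inv: "\<forall>z>0. G z > 0 \<and> (G z)\<^sup>2 * deriv F (G z) = z"
  shows "continuous_on {0..} (\<lambda>s. s / G (s / A) + A * F (G (s / A)))"
proof -
  note FF = F_facts[OF F_cont F_C1 F_nonneg F_0 F_mono G_inv]
  define g where "g s = s / G (s / A) + A * F (G (s / A))" for s
  have g0: "g 0 = 0" unfolding g_def using G_0 F_0 by simp
  have "continuous (at s within {0..}) g" if s: "s \<ge> 0" for s
  proof (cases "s = 0")
    case False
    then have s: "s > 0" using s by simp
    have Gc: "isCont G (s / A)" using FF(3) s A_pos by simp
    have Gp: "G (s/A) > 0" using G_inv s A_pos by simp
    have Fc: "isCont F (G (s/A))" using F_C1(1) Gp differentiable_imp_continuous_within by blast
    have c1: "isCont (\<lambda>s. G (s / A)) s"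
    proof -
      have "isCont (\<lambda>s. s / A) s" using A_pos by (intro continuous_intros) auto
      from isCont_o2[where f="\<lambda>s. s / A" and a=s and g=G, OF this] Gc show ?thesis by simp
    qed
    have c2: "isCont (\<lambda>s. F (G (s / A))) s"
      using isCont_o2[where f="\<lambda>s. G (s / A)" and a=s and g=F] c1 Fc by auto
    have "isCont g s" unfolding g_def
      using c1 c2 Gp by (intro continuous_intros) auto
    then show ?thesis using continuous_at_imp_continuous_at_within by blast
  next
    case True
    show ?thesis unfolding True continuous_within_eps_delta
    proof (intro allI impI)
      fix e :: real assume e: "e > 0"
      define e' where "e' = e / (5 * A)"
      have e': "e' > 0" using e A_pos unfolding e'_def by simp
      have "continuous (at 0 within {0..}) F" using F_cont
        by (simp add: continuous_on_eq_continuous_within)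
      then obtain \<eta> where \<eta>: "\<eta> > 0" "\<And>x. x \<in> {0..} \<Longrightarrow> dist x 0 < \<eta> \<Longrightarrow> dist (F x) (F 0) < e'"
        unfolding continuous_within_eps_delta using e' by blast
      have Fs: "F x < e'" if "0 \<le> x" "x < \<eta>" for x
        using \<eta>(2)[of x] that F_0 by (simp add: dist_real_def)
      define d where "d = A * ((\<eta>/2)\<^sup>2 * deriv F (\<eta>/2))"
      have d: "d > 0" unfolding d_def using FF(1) \<eta> A_pos by simp
      show "\<exists>d>0. \<forall>x'\<in>{0..}. dist x' 0 < d \<longrightarrow> dist (g x') (g 0) < e"
      proof (intro exI[of _ d] conjI ballI impI d)
        fix s :: real assume s: "s \<in> {0..}" "dist s 0 < d"
        show "dist (g s) (g 0) < e"
        proof (cases "s = 0")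
          case True then show ?thesis using g0 e by simp
        next
          case False
          then have s0: "s > 0" using s by simp
          define z where "z = s / A"
          have z: "z > 0" using s0 A_pos unfolding z_def by simp
          have "z < (\<eta>/2)\<^sup>2 * deriv F (\<eta>/2)" using s A_pos unfolding z_def d_def
            by (simp add: dist_real_def field_simps)
          then have Gz: "G z < \<eta>/2" using FF(4)[rule_format, of z "\<eta>/2"] z \<eta>(1) by linarith
          have Gp: "G z > 0" "(G z)\<^sup>2 * deriv F (G z) = z" using G_inv z by auto
          have "z / G z \<le> 4 * F (2 * G z)"
            using FF(2) Gp by (metis)
          also have "\<dots> < 4 * e'" using Fs[of "2 * G z"] Gp Gz by simp
          finally have a: "z / G z < 4 * e'" .
          have b: "F (G z) < e'" using Fs[of "G z"] Gp Gz \<eta> by simp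
          have gs: "g s = A * (z / G z) + A * F (G z)" unfolding g_def z_def using A_pos by simp
          have "g s < A * (4*e') + A * e'" unfolding gs using a b A_pos
            by (intro add_strict_mono mult_strict_left_mono) auto
          also have "\<dots> = e" unfolding e'_def using A_pos by simp
          finally have "g s < e" .
          moreover have "g s \<ge> 0" unfolding gs using Gp z A_pos F_nonneg by simp
          ultimately show ?thesis using g0 by (simp add: dist_real_def)
        qed
      qed
    qed
  qed
  then show ?thesis unfolding g_def[symmetric]
    by (simp add: continuous_on_eq_continuous_within)
qed



lemma min_facts:
  fixes F G :: "real \<Rightarrow> real" and A s x :: real
  assumes A_pos: "A > 0"
    and F_C1: "\<forall>x>0. F differentiable (at x)"
    and F_nonneg: "\<forall>x\<ge>0. F x \<ge> 0"
    and F_0: "F 0 = 0"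
    and F_conv: "strictly_convex_on {0..} (\<lambda>x. x * F x)"
    and G_0: "G 0 = 0"
    and G_inv: "\<forall>z>0. G z > 0 \<and> (G z)\<^sup>2 * deriv F (G z) = z"
    and s: "s \<ge> 0"
  defines "c \<equiv> G (s / A)"
  defines "w \<equiv> s / G (s / A) + A * F (G (s / A))"
  shows "A * c * F c - c * w = - s"
    and "x \<ge> 0 \<Longrightarrow> A * c * F c - c * w \<le> A * x * F x - x * w"
proof -
  have conv: "convex_on {0..} (\<lambda>x. x * F x)"
  proof (rule convex_onI)
    fix t u v :: real assume tuv: "0 < t" "t < 1" "u \<in> {0..}" "v \<in> {0..}"
    show "((1 - t) *\<^sub>R u + t *\<^sub>R v) * F ((1 - t) *\<^sub>R u + t *\<^sub>R v) \<le> (1 - t) * (u * F u) + t * (v * F v)"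
    proof (cases "u = v")
      case True then show ?thesis by (simp add: algebra_simps)
    next
      case False then show ?thesis using F_conv tuv unfolding strictly_convex_on_def
        by (auto intro: less_imp_le)
    qed
  qed (simp add: convex_real_interval)
  have "A * c * F c - c * w = - s \<and> (x \<ge> 0 \<longrightarrow> A * c * F c - c * w \<le> A * x * F x - x * w)"
  proof (cases "s = 0")
    case True
    then have "c = 0" "w = 0" unfolding c_def w_def using G_0 F_0 by auto
    then show ?thesis using True F_nonneg A_pos by auto
  next
    case False
    then have s: "s > 0" using s by simp
    define z where "z = s / A"
    have z: "z > 0" using s A_pos unfolding z_def by simp
    have c: "c > 0" "c\<^sup>2 * deriv F c = z" using G_inv z unfolding c_def z_def by auto
    have w: "w = s / c + A * F c" unfolding w_def c_def by simp
    have e1: "A * c * F c - c * w = - s" unfolding w using c by (simp add: field_simps)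
    moreover have "A * c * F c - c * w \<le> A * x * F x - x * w" if x: "x \<ge> 0"
    proof -
      have D: "DERIV F c :> deriv F c"
        using F_C1 c DERIV_deriv_iff_real_differentiable by blast
      have D2: "((\<lambda>x. x * F x) has_field_derivative (F c + c * deriv F c)) (at c within {0..})"
        using DERIV_mult[OF DERIV_ident D] by (simp add: mult.commute has_field_derivative_at_within)
      have "x * F x - c * F c \<ge> (F c + c * deriv F c) * (x - c)"
        using convex_on_imp_above_tangent[OF conv _ _ _ D2] c x by auto
      moreover have "A * (c * deriv F c) = s / c"
      proof -
        have "c * deriv F c = z / c" using c by (simp add: field_simps power2_eq_square)
        then show ?thesis unfolding z_def using A_pos by simp
      qed
      ultimately have "A * (x * F x - c * F c) \<ge> (A * F c + s / c) * (x - c)"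
        using A_pos by (smt (verit) mult_left_mono distrib_left mult.assoc)
      moreover have "(A*F c + s/c)*(x-c) = x*w - A*c*F c - s" unfolding w using c
        by (simp add: field_simps)
      moreover have "A * (x * F x - c * F c) = A * x * F x - A * c * F c" by (simp add: algebra_simps)
      ultimately show ?thesis using e1 by linarith
    qed
    ultimately show ?thesis by blast
  qed
  then show "A * c * F c - c * w = - s" "x \<ge> 0 \<Longrightarrow> A * c * F c - c * w \<le> A * x * F x - x * w"
    by auto
qed



lemma prob_facts:
  fixes M :: "'a measure" and L :: "real \<Rightarrow> 'a \<Rightarrow> real" and A :: real
  assumes levy: "levy_process M L"
    and second_moment: "integrable M (\<lambda>\<omega>. (L 1 \<omega>)\<^sup>2)"
    and A_pos: "A > 0"
    and drift_nonpos: "integral\<^sup>L M (L 1) \<le> 0"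
  shows "\<And>y y'. y \<in> dom_A M L A \<Longrightarrow> 0 \<le> y' \<Longrightarrow> y' \<le> y \<Longrightarrow> y' \<in> dom_A M L A"
    and "\<And>y. y \<in> dom_A M L A \<Longrightarrow> \<exists>y1\<in>dom_A M L A. y < y1"
    and "\<And>y. y \<in> dom_A M L A \<Longrightarrow> kappaA M L A y \<ge> 0"
    and "continuous_on (dom_A M L A) (kappaA M L A)"
proof -
  define D where "D = dom_A M L A"
  interpret prob_space M using levy unfolding levy_process_def by blast
  have Lm[measurable]: "L 1 \<in> borel_measurable M" using levy unfolding levy_process_def by auto
  have Lint: "integrable M (L 1)"
    using square_integrable_imp_integrable[OF Lm second_moment] .
  have Dc: "y \<in> D \<longleftrightarrow> 0 \<le> y \<and> delta_bar M L < ereal (- A * y)" for y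
    unfolding D_def dom_A_def by simp
  show down: "y' \<in> dom_A M L A" if "y \<in> dom_A M L A" "0 \<le> y'" "y' \<le> y" for y y'
  proof -
    have "ereal (- A * y) \<le> ereal (- A * y')" using that A_pos by (simp add: mult_left_mono)
    then show ?thesis using that Dc[of y] Dc[of y'] unfolding D_def by (meson order_less_le_trans)
  qed
  show up: "\<exists>y1\<in>dom_A M L A. y < y1" if "y \<in> dom_A M L A" for y
  proof -
    have y: "0 \<le> y" "delta_bar M L < ereal (- A * y)" using that Dc unfolding D_def by auto
    obtain r where r: "delta_bar M L < ereal r" "ereal r < ereal (- A * y)"
      using ereal_dense2[OF y(2)] by blast
    have "r < - A * y" using r by simp
    then have "y < - r / A" using A_pos by (simp add: field_simps)
    moreover have "- A * (- r / A) = r" using A_pos by simp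
    ultimately have "- r / A \<in> D" using y r Dc by auto
    then show ?thesis using \<open>y < - r / A\<close> unfolding D_def by blast
  qed
  have dint: "\<exists>d. d < - A * y \<and> d < 0 \<and> integrable M (\<lambda>\<omega>. exp (d * L 1 \<omega>))" if "y \<in> D" for y
  proof -
    have "delta_bar M L < ereal (- A * y)" using that Dc by auto
    then obtain d where "d \<in> {\<delta>::real. \<delta> < 0 \<and> integrable M (\<lambda>\<omega>. exp (\<delta> * L 1 \<omega>))}"
        "ereal d < ereal (- A * y)"
      unfolding delta_bar_def Inf_less_iff by auto
    then show ?thesis by auto
  qed
  have bnd: "exp (x * l) \<le> 1 + exp (d * l)" if "d \<le> x" "x \<le> 0" for x d l :: real
  proof (cases "l \<ge> 0")
    case True
    then have "x * l \<le> 0" using that by (simp add: mult_nonpos_nonneg)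
    then have "exp (x * l) \<le> 1" by simp
    then show ?thesis by (smt (verit) exp_gt_zero)
  next
    case False
    then have "x * l \<le> d * l" using that by (simp add: mult_right_mono_neg)
    then have "exp (x * l) \<le> exp (d * l)" by simp
    then show ?thesis by linarith
  qed
  have intb: "integrable M (\<lambda>\<omega>. exp (x * L 1 \<omega>))"
    if "integrable M (\<lambda>\<omega>. exp (d * L 1 \<omega>))" "d \<le> x" "x \<le> 0" for x d
  proof (rule Bochner_Integration.integrable_bound[where f = "\<lambda>\<omega>. 1 + exp (d * L 1 \<omega>)"])
    show "integrable M (\<lambda>\<omega>. 1 + exp (d * L 1 \<omega>))" using that by simp
    show "(\<lambda>\<omega>. exp (x * L 1 \<omega>)) \<in> borel_measurable M" by measurable
    show "AE \<omega> in M. norm (exp (x * L 1 \<omega>)) \<le> norm (1 + exp (d * L 1 \<omega>))"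
      using bnd[OF that(2,3)] by (auto intro!: AE_I2 simp: add_nonneg_nonneg)
  qed
  have ge1: "integral\<^sup>L M (\<lambda>\<omega>. exp (x * L 1 \<omega>)) \<ge> 1"
    if "integrable M (\<lambda>\<omega>. exp (x * L 1 \<omega>))" "x \<le> 0" for x
  proof -
    have "integral\<^sup>L M (\<lambda>\<omega>. 1 + x * L 1 \<omega>) \<le> integral\<^sup>L M (\<lambda>\<omega>. exp (x * L 1 \<omega>))"
      using that Lint by (intro integral_mono) (auto simp: exp_ge_add_one_self)
    moreover have "integral\<^sup>L M (\<lambda>\<omega>. 1 + x * L 1 \<omega>) = 1 + x * integral\<^sup>L M (L 1)"
      using Lint by (simp add: prob_space)
    moreover have "x * integral\<^sup>L M (L 1) \<ge> 0" using that drift_nonpos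
      by (simp add: mult_nonpos_nonpos)
    ultimately show ?thesis by linarith
  qed
  have mD: "integrable M (\<lambda>\<omega>. exp ((- A * y) * L 1 \<omega>))" if yD: "y \<in> D" for y
  proof -
    obtain d where "d < - A * y" "d < 0" "integrable M (\<lambda>\<omega>. exp (d * L 1 \<omega>))" using dint yD by blast
    moreover have "- A * y \<le> 0" using yD Dc A_pos by simp
    ultimately show ?thesis using intb by (meson less_imp_le)
  qed
  show "kappaA M L A y \<ge> 0" if "y \<in> dom_A M L A" for y
  proof -
    have "- A * y \<le> 0" using that Dc A_pos unfolding D_def by simp
    then have "integral\<^sup>L M (\<lambda>\<omega>. exp ((- A * y) * L 1 \<omega>)) \<ge> 1" using ge1 mD that unfolding D_def by blast
    then show ?thesis unfolding kappaA_def kappa_def by simp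
  qed
  show "continuous_on (dom_A M L A) (kappaA M L A)"
    unfolding D_def[symmetric] continuous_on_eq_continuous_within
  proof
    fix y0 assume y0: "y0 \<in> D"
    obtain y1 where y1: "y1 \<in> D" "y0 < y1" using up y0 unfolding D_def by blast
    obtain d where d: "d < - A * y1" "d < 0" "integrable M (\<lambda>\<omega>. exp (d * L 1 \<omega>))"
      using dint y1 by blast
    define m where "m y = integral\<^sup>L M (\<lambda>\<omega>. exp ((- A * y) * L 1 \<omega>))" for y
    have cm: "continuous_on {0..y1} m"
    proof (rule continuous_on_sequentiallyI)
      fix u :: "nat \<Rightarrow> real" and a assume u: "\<forall>n. u n \<in> {0..y1}" "a \<in> {0..y1}" "u \<longlonglongrightarrow> a"
      have rng: "d \<le> - A * t" "- A * t \<le> 0" if "t \<in> {0..y1}" for t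
      proof -
        have "- A * y1 \<le> - A * t" using that A_pos by (simp add: mult_left_mono)
        then show "d \<le> - A * t" using d by simp
        show "- A * t \<le> 0" using that A_pos by simp
      qed
      show "(\<lambda>n. m (u n)) \<longlonglongrightarrow> m a"
        unfolding m_def
      proof (rule integral_dominated_convergence[where w = "\<lambda>\<omega>. 1 + exp (d * L 1 \<omega>)"])
        show "(\<lambda>\<omega>. exp (- A * a * L 1 \<omega>)) \<in> borel_measurable M" by measurable
        show "(\<lambda>\<omega>. exp (- A * u i * L 1 \<omega>)) \<in> borel_measurable M" for i by measurable
        show "integrable M (\<lambda>\<omega>. 1 + exp (d * L 1 \<omega>))" using d by simp
        show "AE \<omega> in M. (\<lambda>i. exp (- A * u i * L 1 \<omega>)) \<longlonglongrightarrow> exp (- A * a * L 1 \<omega>)"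
          using u(3) by (intro AE_I2 tendsto_intros)
        show "AE \<omega> in M. norm (exp (- A * u i * L 1 \<omega>)) \<le> 1 + exp (d * L 1 \<omega>)" for i
          using bnd[OF rng[OF u(1)[rule_format, of i]]] by (intro AE_I2) simp
      qed
    qed
    have "\<forall>t\<in>{0..y1}. m t \<noteq> 0"
    proof
      fix t assume t: "t \<in> {0..y1}"
      then have "t \<in> D" using down[of y1 t] y1 unfolding D_def by auto
      moreover have "- A * t \<le> 0" using A_pos t by simp
      ultimately have "m t \<ge> 1" unfolding m_def using ge1[OF mD] by blast
      then show "m t \<noteq> 0" by simp
    qed
    then have "continuous_on {0..y1} (\<lambda>t. ln (m t))" using cm by (intro continuous_on_ln)
    moreover have "kappaA M L A = (\<lambda>t. ln (m t))"
      unfolding kappaA_def kappa_def m_def by auto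
    ultimately have "continuous (at y0 within {0..y1}) (kappaA M L A)"
      using y0 y1 Dc by (simp add: continuous_on_eq_continuous_within)
    moreover have "at y0 within D = at y0 within {0..y1}"
    proof (rule at_within_nhd[where S = "{..<y1}"])
      show "y0 \<in> {..<y1}" using y1 by simp
      show "open {..<y1}" by simp
      have "D \<inter> {..<y1} = {0..<y1}"
      proof (intro set_eqI iffI)
        fix t assume "t \<in> D \<inter> {..<y1}" then show "t \<in> {0..<y1}" using Dc[of t] by simp
      next
        fix t assume t: "t \<in> {0..<y1}"
        then have "t \<in> dom_A M L A" using down[of y1 t] y1(1) unfolding D_def by simp
        then show "t \<in> D \<inter> {..<y1}" using t unfolding D_def by simp
      qed
      moreover have "{0..y1} \<inter> {..<y1} = {0..<y1::real}" by auto
      ultimately show "D \<inter> {..<y1} - {y0} = {0..y1} \<inter> {..<y1} - {y0}" by (simp only:)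
    qed
    ultimately show "continuous (at y0 within D) (kappaA M L A)"
      by (simp add: continuous_within)
  qed
qed


theorem mainTheorem8:
  fixes M :: "'a measure" and L :: "real \<Rightarrow> 'a \<Rightarrow> real"
    and A :: real and F G :: "real \<Rightarrow> real"
  assumes levy: "levy_process M L"
    and nontrivial: "\<not> (\<forall>t\<ge>0. AE \<omega> in M. L t \<omega> = 0)"
    and second_moment: "integrable M (\<lambda>\<omega>. (L 1 \<omega>)\<^sup>2)"
    and exp_moment: "\<exists>\<delta><0. integrable M (\<lambda>\<omega>. exp (\<delta> * L 1 \<omega>))"
    and A_pos: "A > 0"
    and drift_nonpos: "integral\<^sup>L M (L 1) \<le> 0"
    and F_cont: "continuous_on {0..} F"
    and F_C1: "\<forall>x>0. F differentiable (at x)" "continuous_on {0<..} (deriv F)"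
    and F_nonneg: "\<forall>x\<ge>0. F x \<ge> 0"
    and F_0: "F 0 = 0"
    and F_conv: "strictly_convex_on {0..} (\<lambda>x. x * F x)"
    and F_mono: "strict_mono_on {0<..} (\<lambda>x. x\<^sup>2 * deriv F x)"
    and F_lim: "filterlim (\<lambda>x. x\<^sup>2 * deriv F x) at_top at_top"
    and G_0: "G 0 = 0"
    and G_inv: "\<forall>z>0. G z > 0 \<and> (G z)\<^sup>2 * deriv F (G z) = z"
  shows
    "let D = dom_A M L A;
         k = kappaA M L A;
         w = (\<lambda>u. k u / G (k u / A) + A * F (G (k u / A)));
         v = (\<lambda>y. integral {0..y} w)
     in (\<forall>y\<in>D. (v has_real_derivative w y) (at y within D))
        \<and> continuous_on D w
        \<and> v 0 = 0
        \<and> (\<forall>y\<in>D. k y + (INF x\<in>{0..}. A * x * F x - x * w y) = 0)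
        \<and> (\<forall>y\<in>D. \<forall>x\<ge>0. A * G (k y / A) * F (G (k y / A)) - G (k y / A) * w y
                           \<le> A * x * F x - x * w y)"
  proof -
  define D where "D = dom_A M L A"
  define k where "k = kappaA M L A"
  define w where "w = (\<lambda>u. k u / G (k u / A) + A * F (G (k u / A)))"
  define v where "v = (\<lambda>y. integral {0..y} w)"
  note P = prob_facts[OF levy second_moment A_pos drift_nonpos]
  have kD: "k y \<ge> 0" if "y \<in> D" for y using P(3) that unfolding k_def D_def by blast
  have wc: "continuous_on D w"
  proof -
    have "continuous_on D (\<lambda>y. (\<lambda>s. s / G (s / A) + A * F (G (s / A))) (k y))"
    proof (rule continuous_on_compose2[OF g_cont[OF A_pos F_cont F_C1 F_nonneg F_0 F_mono G_0 G_inv]])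
      show "continuous_on D k" using P(4) unfolding D_def k_def .
      show "k ` D \<subseteq> {0..}" using kD by auto
    qed
    then show ?thesis unfolding w_def by simp
  qed
  have dv: "(v has_real_derivative w y) (at y within D)" if y: "y \<in> D" for y
  proof -
    obtain y1 where y1: "y1 \<in> D" "y < y1" using P(2) y unfolding D_def by blast
    have sub: "{0..y1} \<subseteq> D" using P(1)[of y1] y1 unfolding D_def by auto
    have yy: "y \<in> {0..y1}" using y y1 P(1) unfolding D_def dom_A_def by auto
    have "(v has_vector_derivative w y) (at y within {0..y1})" unfolding v_def
      by (rule integral_has_vector_derivative[OF continuous_on_subset[OF wc sub] yy])
    then have d1: "(v has_real_derivative w y) (at y within {0..y1})"
      by (simp add: has_real_derivative_iff_has_vector_derivative)
    have "at y within D = at y within {0..y1}"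
    proof (rule at_within_nhd[where S = "{..<y1}"])
      show "y \<in> {..<y1}" using y1 by simp
      show "open {..<y1}" by simp
      have "D \<inter> {..<y1} = {0..<y1}"
      proof (intro set_eqI iffI)
        fix t assume "t \<in> D \<inter> {..<y1}" then show "t \<in> {0..<y1}" unfolding D_def dom_A_def by simp
      next
        fix t assume t: "t \<in> {0..<y1}"
        then show "t \<in> D \<inter> {..<y1}" using sub by auto
      qed
      moreover have "{0..y1} \<inter> {..<y1} = {0..<y1::real}" by auto
      ultimately show "D \<inter> {..<y1} - {y} = {0..y1} \<inter> {..<y1} - {y}" by (simp only:)
    qed
    then show ?thesis using d1 by simp
  qed
  have v0: "v 0 = 0" unfolding v_def by simp
  have mf: "A * G (k y / A) * F (G (k y / A)) - G (k y / A) * w y = - k y"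
     "x \<ge> 0 \<Longrightarrow> A * G (k y / A) * F (G (k y / A)) - G (k y / A) * w y \<le> A * x * F x - x * w y"
    if "y \<in> D" for y x
    using min_facts(1)[OF A_pos F_C1(1) F_nonneg F_0 F_conv G_0 G_inv kD[OF that]]
      min_facts(2)[OF A_pos F_C1(1) F_nonneg F_0 F_conv G_0 G_inv kD[OF that], of x]
    unfolding w_def by auto
  have inf: "k y + (INF x\<in>{0..}. A * x * F x - x * w y) = 0" if y: "y \<in> D" for y
  proof -
    have "(INF x\<in>{0..}. A * x * F x - x * w y) = - k y"
    proof (rule cInf_eq_minimum)
      have "G (k y / A) \<ge> 0"
      proof (cases "k y = 0")
        case True then show ?thesis using G_0 by simp
      next
        case False then have "k y / A > 0" using kD[OF y] A_pos by simp
        then show ?thesis using G_inv by (simp add: less_imp_le)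
      qed
      then show "- k y \<in> (\<lambda>x. A * x * F x - x * w y) ` {0..}"
        using mf(1)[OF y] by (intro image_eqI[of _ _ "G (k y / A)"]) auto
      show "- k y \<le> z" if "z \<in> (\<lambda>x. A * x * F x - x * w y) ` {0..}" for z
        using that mf[OF y] by auto
    qed
    then show ?thesis by simp
  qed
  have "(\<forall>y\<in>D. (v has_real_derivative w y) (at y within D))
        \<and> continuous_on D w
        \<and> v 0 = 0
        \<and> (\<forall>y\<in>D. k y + (INF x\<in>{0..}. A * x * F x - x * w y) = 0)
        \<and> (\<forall>y\<in>D. \<forall>x\<ge>0. A * G (k y / A) * F (G (k y / A)) - G (k y / A) * w y
                           \<le> A * x * F x - x * w y)"
    using dv wc v0 inf mf(2) by blast
  then show ?thesis unfolding Let_def D_def k_def w_def v_def .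
qed

end
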